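(* Let $\mu^*=\max_{p\in(0,1]}\frac{p}{w_-(p)}$. Then $\mu^*>1$, and there exists a unique $p^*\in(0,1)$ such that $\mu^*w_-(p^* )=p^*$.
   Context: $w_-:[0,1]\to[0,1]$ is strictly increasing, thrice differentiable, with $w_-(0)=0$, $w_-(1)=1$, $w_-'(0)>1$, $w_-'(1)>1$ and $w_-'''(p)>0$ for all $p$ (so $w_-$ is strictly concave then strictly convex). *)

theory Defs
  imports Complex_Main
begin

end

theory Submission
  imports Defs
begin

lemma rolle01:
  fixes g g' :: "real \<Rightarrow> real"
  assumes d: "\<And>x. x \<in> {0..1} \<Longrightarrow> (g has_real_derivative g' x) (at x within {0..1})"
    and ab: "0 \<le> a" "a < b" "b \<le> 1" and eq: "g a = g b"
  shows "\<exists>z. a < z \<and> z < b \<and> g' z = 0"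
proof -
  have "continuous_on {0..1} g"
    using d by (meson DERIV_continuous continuous_on_eq_continuous_within)
  then have cont: "continuous_on {a..b} g"
    by (rule continuous_on_subset) (use ab in auto)
  have der: "(g has_derivative (*) (g' x)) (at x)" if "a < x" "x < b" for x
  proof -
    have "(g has_real_derivative g' x) (at x within {0..1})" using d that ab by auto
    moreover have "at x within {0..1} = at x" using that ab by (intro at_within_Icc_at) auto
    ultimately show ?thesis by (simp add: has_field_derivative_def)
  qed
  obtain z where z: "a < z" "z < b" "(*) (g' z) = (\<lambda>v. 0)"
    using Rolle_deriv[OF ab(2) eq cont der] by blast
  have "g' z * 1 = 0" using fun_cong[OF z(3), of 1] by simp
  then show ?thesis using z(1,2) by (intro exI[of _ z]) simp
qed

theorem lemma1:
  fixes w w1 w2 w3 :: "real \<Rightarrow> real"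
  assumes mono: "strict_mono_on {0..1} w"
    and range: "w ` {0..1} \<subseteq> {0..1}"
    and d1: "\<And>x. x \<in> {0..1} \<Longrightarrow> (w has_real_derivative w1 x) (at x within {0..1})"
    and d2: "\<And>x. x \<in> {0..1} \<Longrightarrow> (w1 has_real_derivative w2 x) (at x within {0..1})"
    and d3: "\<And>x. x \<in> {0..1} \<Longrightarrow> (w2 has_real_derivative w3 x) (at x within {0..1})"
    and w0: "w 0 = 0" and w1': "w 1 = 1"
    and d0: "w1 0 > 1" and d1': "w1 1 > 1"
    and d3pos: "\<And>p. p \<in> {0..1} \<Longrightarrow> w3 p > 0"
  shows "(\<exists>p\<in>{0<..1}. p / w p = (SUP q\<in>{0<..1}. q / w q)) \<and>
         (SUP p\<in>{0<..1}. p / w p) > 1 \<and>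
         (\<exists>!p. p \<in> {0<..<1} \<and> (SUP q\<in>{0<..1}. q / w q) * w p = p)"
proof -
  have wpos: "w x > 0" if "0 < x" "x \<le> 1" for x
    using strict_mono_onD[OF mono, of 0 x] that w0 by auto
  have "((\<lambda>y. (w y - w 0) / (y - 0)) \<longlongrightarrow> w1 0) (at 0 within {0..1})"
    using d1[of 0] by (simp add: has_field_derivative_iff)
  then have "eventually (\<lambda>y. (w y - w 0) / (y - 0) > 1) (at 0 within {0..1})"
    using d0 by (rule order_tendstoD)
  then obtain d where d: "d > 0" and dP: "\<And>y. y \<in> {0..1} \<Longrightarrow> y \<noteq> 0 \<Longrightarrow> dist y 0 < d \<Longrightarrow> (w y - w 0) / (y - 0) > 1"
    unfolding eventually_at by blast
  define \<delta> where "\<delta> = min (d/2) (1/2)"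
  have \<delta>: "0 < \<delta>" "\<delta> < 1" using d by (auto simp: \<delta>_def)
  have small: "w y > y" if "0 < y" "y \<le> \<delta>" for y
  proof -
    have "(w y - w 0) / (y - 0) > 1" using dP[of y] that d by (auto simp: \<delta>_def dist_real_def)
    with that w0 show ?thesis by (simp add: field_simps)
  qed
  have "((\<lambda>y. (w y - w 1) / (y - 1)) \<longlongrightarrow> w1 1) (at 1 within {0..1})"
    using d1[of 1] by (simp add: has_field_derivative_iff)
  then have "eventually (\<lambda>y. (w y - w 1) / (y - 1) > 1) (at 1 within {0..1})"
    using d1' by (rule order_tendstoD)
  then obtain e where e: "e > 0" and eP: "\<And>y. y \<in> {0..1} \<Longrightarrow> y \<noteq> 1 \<Longrightarrow> dist y 1 < e \<Longrightarrow> (w y - w 1) / (y - 1) > 1"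
    unfolding eventually_at by blast
  define p0 where "p0 = max (1 - e/2) (1/2)"
  have p0: "0 < p0" "p0 < 1" using e by (auto simp: p0_def)
  have wp0: "w p0 < p0"
  proof -
    have "(w p0 - w 1) / (p0 - 1) > 1" using eP[of p0] p0 e by (auto simp: p0_def dist_real_def)
    with p0 w1' show ?thesis by (simp add: field_simps)
  qed
  have p0d: "\<delta> < p0" using small[of p0] wp0 p0 by force
  have contw: "continuous_on {0..1} w"
    using d1 by (meson DERIV_continuous continuous_on_eq_continuous_within)
  have "continuous_on {\<delta>..1} (\<lambda>q. q / w q)"
    apply (intro continuous_intros continuous_on_subset[OF contw])
    using \<delta> wpos by (auto, smt (verit))
  then obtain pm where pm: "pm \<in> {\<delta>..1}" and pmax: "\<And>q. q \<in> {\<delta>..1} \<Longrightarrow> q / w q \<le> pm / w pm"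
    using continuous_attains_sup[of "{\<delta>..1}" "\<lambda>q. q / w q"] \<delta> by auto
  define M where "M = pm / w pm"
  have M1: "M > 1"
  proof -
    have "p0 / w p0 > 1" using wp0 wpos[of p0] p0 by simp
    moreover have "p0 / w p0 \<le> M" using pmax[of p0] p0 p0d by (auto simp: M_def)
    ultimately show ?thesis by simp
  qed
  have ub: "q / w q \<le> M" if "q \<in> {0<..1}" for q
  proof (cases "q \<le> \<delta>")
    case True
    with that small[of q] have "q / w q < 1" using wpos[of q] by simp
    with M1 show ?thesis by simp
  next
    case False
    with that pmax[of q] show ?thesis by (auto simp: M_def)
  qed
  have pm01: "pm \<in> {0<..1}" using pm \<delta> by auto
  have SUPeq: "(SUP q\<in>{0<..1}. q / w q) = M"
    unfolding M_def by (rule cSup_eq_maximum) (use pm01 ub in \<open>auto simp: M_def\<close>)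
  have pmlt: "pm < 1"
  proof -
    have "pm \<noteq> 1" using M1 w1' by (auto simp: M_def)
    with pm show ?thesis by auto
  qed
  have Mpm: "M * w pm = pm" using wpos[of pm] pm01 by (auto simp: M_def)
  have hge: "M * w y - y \<ge> 0" if "y \<in> {0..1}" for y
  proof (cases "y = 0")
    case True then show ?thesis using w0 by simp
  next
    case False
    then have "y \<in> {0<..1}" using that by auto
    then have "y / w y \<le> M" "w y > 0" using ub wpos by auto
    then show ?thesis by (simp add: field_simps)
  qed
  have crit: "w1 p = 1 / M" if "p \<in> {0<..<1}" "M * w p = p" for p
  proof -
    have "((\<lambda>y. M * w y - y) has_real_derivative M * w1 p - 1) (at p within {0..1})"
      using that by (auto intro!: derivative_eq_intros d1)
    moreover have "at p within {0..1} = at p" using that by (intro at_within_Icc_at) auto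
    ultimately have D: "((\<lambda>y. M * w y - y) has_real_derivative M * w1 p - 1) (at p)" by simp
    have "M * w1 p - 1 = 0"
    proof (rule DERIV_local_min[OF D, of "min p (1 - p)"])
      show "0 < min p (1 - p)" using that by auto
      show "\<forall>y. \<bar>p - y\<bar> < min p (1 - p) \<longrightarrow> M * w p - p \<le> M * w y - y"
        using that hge by (auto simp: abs_if split: if_splits)
    qed
    then show ?thesis using M1 by (simp add: field_simps)
  qed
  have uniq: "p = q" if p: "p \<in> {0<..<1}" "M * w p = p" and q: "q \<in> {0<..<1}" "M * w q = q" for p q
  proof (rule ccontr)
    assume "p \<noteq> q"
    have main: False if a: "a \<in> {0<..<1}" "M * w a = a" "b \<in> {0<..<1}" "M * w b = b" "a < b" for a b
    proof -
      have dh: "\<And>x. x \<in> {0..1} \<Longrightarrow> ((\<lambda>y. M * w y - y) has_real_derivative M * w1 x - 1) (at x within {0..1})"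
        by (auto intro!: derivative_eq_intros d1)
      obtain c where c: "a < c" "c < b" "M * w1 c - 1 = 0"
        using rolle01[OF dh, of a b] a by auto
      have wc: "w1 c = 1 / M" using c M1 by (simp add: field_simps)
      have wa: "w1 a = 1 / M" "w1 b = 1 / M" using crit a by auto
      have dg: "\<And>x. x \<in> {0..1} \<Longrightarrow> ((\<lambda>y. w1 y - 1 / M) has_real_derivative w2 x) (at x within {0..1})"
        by (auto intro!: derivative_eq_intros d2)
      obtain r1 where r1: "a < r1" "r1 < c" "w2 r1 = 0"
        using rolle01[OF dg, of a c] a c wa wc by auto
      obtain r2 where r2: "c < r2" "r2 < b" "w2 r2 = 0"
        using rolle01[OF dg, of c b] a c wa wc by auto
      obtain s where s: "r1 < s" "s < r2" "w3 s = 0"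
        using rolle01[OF d3, of r1 r2] r1 r2 a c by auto
      have "w3 s > 0" using d3pos[of s] s r1 r2 a by auto
      with s show False by simp
    qed
    show False
    proof (cases "p < q")
      case True then show ?thesis using main[OF p q] by blast
    next
      case False then have "q < p" using \<open>p \<noteq> q\<close> by auto
      then show ?thesis using main[OF q p] by blast
    qed
  qed
  show ?thesis
    unfolding SUPeq
  proof (intro conjI)
    show "\<exists>p\<in>{0<..1}. p / w p = M" using pm01 by (auto simp: M_def)
    show "M > 1" by (rule M1)
    show "\<exists>!p. p \<in> {0<..<1} \<and> M * w p = p"
      using pm01 pmlt Mpm uniq by (intro ex1I[of _ pm]) auto
  qed
qed

end
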